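(* Let $s\in(\frac12,1)$, let $\Omega\subset\mathbb R^N$ be a bounded open set, and let $u:\mathbb R^N\to\mathbb R$ be a solution of $\Delta^s_\infty u=0$ in $\Omega$ (in the viscosity sense) with $u=f$ on $\mathbb R^N\setminus\Omega$, where $f\in C^{0,2s-1}(\mathbb R^N\setminus\Omega)$. Then $u\in C^{0,2s-1}(\mathbb R^N)$ and $[u]_{C^{0,2s-1}(\mathbb R^N)}\le[f]_{C^{0,2s-1}(\mathbb R^N\setminus\Omega)}$.
   Context: $S^{N-1}$ unit sphere. $\phi\in C^{1,1}(x_0)$ means there are $p\in\mathbb R^N$, $M,\eta_0>0$ with $|\phi(x_0+x)-\phi(x_0)-p\cdot x|\le M|x|^2$ for $|x|<\eta_0$; $\nabla\phi(x_0):=p$. Infinity fractional Laplacian: if $\nabla\phi(x)\ne0$, $v=\nabla\phi(x)/|\nabla\phi(x)|$, $\Delta^s_\infty\phi(x)=\int_0^\infty\frac{\phi(x+\eta v)+\phi(x-\eta v)-2\phi(x)}{\eta^{1+2s}}d\eta$; if $\nabla\phi(x)=0$, $\Delta^s_\infty\phi(x)=\sup_{y\in S^{N-1}}\int_0^\infty\frac{\phi(x+\eta y)-\phi(x)}{\eta^{1+2s}}d\eta+\inf_{z\in S^{N-1}}\int_0^\infty\frac{\phi(x-\eta z)-\phi(x)}{\eta^{1+2s}}d\eta$. An upper [lower] semicontinuous $u$ is a subsolution [supersolution] at $x_0$ if whenever $r>0$, $\phi\in C^{1,1}(x_0)\cap C(\overline{B_r(x_0)})$, $\phi(x_0)=u(x_0)$,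 $\phi>u$ [$\phi<u$] on $B_r(x_0)\setminus\{x_0\}$, the function $\tilde u$ equal to $\phi$ on $B_r(x_0)$ and to $u$ elsewhere satisfies $\Delta^s_\infty\tilde u(x_0)\ge0$ [$\le0$]; a solution in $\Omega$ is both at every point of $\Omega$. $[f]_{C^{0,\gamma}(A)}=\sup_{x,y\in A}|f(x)-f(y)|/|x-y|^\gamma$, $f\in C^{0,\gamma}(A)$ if finite. *)

theory Defs
  imports "HOL-Analysis.Analysis"
begin

definition c11_grad :: "('a::euclidean_space \<Rightarrow> real) \<Rightarrow> 'a \<Rightarrow> 'a \<Rightarrow> bool" where
  "c11_grad \<phi> x0 p \<longleftrightarrow> (\<exists>M \<eta>0. M > 0 \<and> \<eta>0 > 0 \<and>
     (\<forall>x. norm x < \<eta>0 \<longrightarrow> \<bar>\<phi> (x0 + x) - \<phi> x0 - p \<bullet> x\<bar> \<le> M * (norm x)\<^sup>2))"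

definition C11_at :: "('a::euclidean_space \<Rightarrow> real) \<Rightarrow> 'a \<Rightarrow> bool" where
  "C11_at \<phi> x0 \<longleftrightarrow> (\<exists>p. c11_grad \<phi> x0 p)"

definition grad_at :: "('a::euclidean_space \<Rightarrow> real) \<Rightarrow> 'a \<Rightarrow> 'a" where
  "grad_at \<phi> x0 = (THE p. c11_grad \<phi> x0 p)"

definition inf_frac_lap :: "real \<Rightarrow> ('a::euclidean_space \<Rightarrow> real) \<Rightarrow> 'a \<Rightarrow> real" where
  "inf_frac_lap s \<phi> x =
    (if grad_at \<phi> x \<noteq> 0 then
       (let v = grad_at \<phi> x /\<^sub>R norm (grad_at \<phi> x) in
        LINT \<eta>:{0<..}|lborel. (\<phi> (x + \<eta> *\<^sub>R v) + \<phi> (x - \<eta> *\<^sub>R v) - 2 * \<phi> x) / \<eta> powr (1 + 2 * s))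
     else
       (SUP y\<in>sphere 0 1. LINT \<eta>:{0<..}|lborel. (\<phi> (x + \<eta> *\<^sub>R y) - \<phi> x) / \<eta> powr (1 + 2 * s))
     + (INF z\<in>sphere 0 1. LINT \<eta>:{0<..}|lborel. (\<phi> (x - \<eta> *\<^sub>R z) - \<phi> x) / \<eta> powr (1 + 2 * s)))"

definition usc :: "('a::metric_space \<Rightarrow> real) \<Rightarrow> bool" where
  "usc u \<longleftrightarrow> (\<forall>x e. e > 0 \<longrightarrow> (\<forall>\<^sub>F y in at x. u y < u x + e))"

definition lsc :: "('a::metric_space \<Rightarrow> real) \<Rightarrow> bool" where
  "lsc u \<longleftrightarrow> (\<forall>x e. e > 0 \<longrightarrow> (\<forall>\<^sub>F y in at x. u y > u x - e))"

definition viscosity_subsolution_at :: "real \<Rightarrow> ('a::euclidean_space \<Rightarrow> real) \<Rightarrow> 'a \<Rightarrow> bool" where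
  "viscosity_subsolution_at s u x0 \<longleftrightarrow> usc u \<and>
    (\<forall>r \<phi>. r > 0 \<and> C11_at \<phi> x0 \<and> continuous_on (cball x0 r) \<phi> \<and> \<phi> x0 = u x0 \<and>
       (\<forall>x\<in>ball x0 r - {x0}. \<phi> x > u x) \<longrightarrow>
       inf_frac_lap s (\<lambda>x. if x \<in> ball x0 r then \<phi> x else u x) x0 \<ge> 0)"

definition viscosity_supersolution_at :: "real \<Rightarrow> ('a::euclidean_space \<Rightarrow> real) \<Rightarrow> 'a \<Rightarrow> bool" where
  "viscosity_supersolution_at s u x0 \<longleftrightarrow> lsc u \<and>
    (\<forall>r \<phi>. r > 0 \<and> C11_at \<phi> x0 \<and> continuous_on (cball x0 r) \<phi> \<and> \<phi> x0 = u x0 \<and>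
       (\<forall>x\<in>ball x0 r - {x0}. \<phi> x < u x) \<longrightarrow>
       inf_frac_lap s (\<lambda>x. if x \<in> ball x0 r then \<phi> x else u x) x0 \<le> 0)"

definition viscosity_solution :: "real \<Rightarrow> ('a::euclidean_space \<Rightarrow> real) \<Rightarrow> 'a set \<Rightarrow> bool" where
  "viscosity_solution s u \<Omega> \<longleftrightarrow>
    (\<forall>x0\<in>\<Omega>. viscosity_subsolution_at s u x0 \<and> viscosity_supersolution_at s u x0)"

definition holder_seminorm :: "('a::metric_space \<Rightarrow> real) \<Rightarrow> 'a set \<Rightarrow> real \<Rightarrow> ereal" where
  "holder_seminorm f A \<gamma> =
     (SUP p\<in>{(x, y). x \<in> A \<and> y \<in> A \<and> x \<noteq> y}.
        ereal (\<bar>f (fst p) - f (snd p)\<bar> / dist (fst p) (snd p) powr \<gamma>))"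

definition holder :: "('a::metric_space \<Rightarrow> real) \<Rightarrow> 'a set \<Rightarrow> real \<Rightarrow> bool" where
  "holder f A \<gamma> \<longleftrightarrow> holder_seminorm f A \<gamma> < \<infinity>"

end

theory Submission
  imports Defs "HOL-Real_Asymp.Real_Asymp"
begin

lemma ftc_Ioo:
  fixes f F :: "real \<Rightarrow> real"
  assumes "a < b"
    and "\<And>x. a < x \<Longrightarrow> x < b \<Longrightarrow> DERIV F x :> f x"
    and "\<And>x. a < x \<Longrightarrow> x < b \<Longrightarrow> isCont f x"
    and "\<And>x. a < x \<Longrightarrow> x < b \<Longrightarrow> 0 \<le> f x"
    and "(F \<longlongrightarrow> A) (at_right a)" and "(F \<longlongrightarrow> B) (at_left b)"
  shows "set_integrable lborel {a<..<b} f" "(LINT x:{a<..<b}|lborel. f x) = B - A"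
proof -
  have 1: "set_integrable lborel (einterval (ereal a) (ereal b)) f"
     "(LBINT x=ereal a..ereal b. f x) = B - A"
    using assms by (intro interval_integral_FTC_nonneg; auto simp: ereal_tendsto_simps1)+
  show "set_integrable lborel {a<..<b} f" using 1 by simp
  show "(LINT x:{a<..<b}|lborel. f x) = B - A" using 1 assms(1) by (simp add: interval_integral_Ioo)
qed

lemma ftc_Ioi:
  fixes f F :: "real \<Rightarrow> real"
  assumes "\<And>x. a < x \<Longrightarrow> DERIV F x :> f x"
    and "\<And>x. a < x \<Longrightarrow> isCont f x"
    and "\<And>x. a < x \<Longrightarrow> 0 \<le> f x"
    and "(F \<longlongrightarrow> A) (at_right a)" and "(F \<longlongrightarrow> B) at_top"
  shows "set_integrable lborel {a<..} f" "(LINT x:{a<..}|lborel. f x) = B - A"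
proof -
  have 1: "set_integrable lborel (einterval (ereal a) \<infinity>) f"
     "(LBINT x=ereal a..\<infinity>. f x) = B - A"
    using assms by (intro interval_integral_FTC_nonneg; auto simp: ereal_tendsto_simps1)+
  show "set_integrable lborel {a<..} f" using 1 by simp
  show "(LINT x:{a<..}|lborel. f x) = B - A" using 1 by (simp add: interval_integral_to_infinity_eq)
qed

lemma int_pow_0r:
  fixes p r :: real
  assumes "p > -1" "r > 0"
  shows "set_integrable lborel {0<..<r} (\<lambda>x. x powr p)"
    "(LINT x:{0<..<r}|lborel. x powr p) = r powr (p+1) / (p+1)"
proof -
  have d: "DERIV (\<lambda>x. x powr (p+1) / (p+1)) x :> x powr p" if "0 < x" for x
  proof -
    have "((\<lambda>x. x powr (p+1)) has_real_derivative (p+1) * x powr (p+1-1)) (at x)"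
      by (rule has_real_derivative_powr[OF that])
    from DERIV_cdivide[OF this, of "p+1"] show ?thesis using assms by simp
  qed
  have l0: "((\<lambda>x. x powr (p+1) / (p+1)) \<longlongrightarrow> 0) (at_right 0)"
    using assms by real_asymp
  have lr: "((\<lambda>x. x powr (p+1) / (p+1)) \<longlongrightarrow> r powr (p+1) / (p+1)) (at_left r)"
    using assms by (auto intro!: tendsto_eq_intros)
  show "set_integrable lborel {0<..<r} (\<lambda>x. x powr p)"
    "(LINT x:{0<..<r}|lborel. x powr p) = r powr (p+1) / (p+1)"
  proof -
    have c: "isCont (\<lambda>x. x powr p) x" if "0 < x" for x
      using that by (auto simp: isCont_def intro!: tendsto_eq_intros)
    show "set_integrable lborel {0<..<r} (\<lambda>x. x powr p)"
      "(LINT x:{0<..<r}|lborel. x powr p) = r powr (p+1) / (p+1)"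
      using ftc_Ioo[OF assms(2) d c _ l0 lr] by auto
  qed
qed

lemma int_pow_rinf:
  fixes q r :: real
  assumes "q > 1" "r > 0"
  shows "set_integrable lborel {r<..} (\<lambda>x. x powr (-q))"
    "(LINT x:{r<..}|lborel. x powr (-q)) = r powr (1-q) / (q-1)"
proof -
  have d: "DERIV (\<lambda>x. - (x powr (1-q) / (q-1))) x :> x powr (-q)" if "r < x" for x
  proof -
    have "((\<lambda>x. x powr (1-q)) has_real_derivative (1-q) * x powr (1-q-1)) (at x)"
      by (rule has_real_derivative_powr) (use that assms in auto)
    from DERIV_minus[OF DERIV_cdivide[OF this, of "q-1"]] show ?thesis
      by (rule DERIV_cong) (use assms in \<open>simp add: field_simps\<close>)
  qed
  have l0: "((\<lambda>x. - (x powr (1-q) / (q-1))) \<longlongrightarrow> - (r powr (1-q) / (q-1))) (at_right r)"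
    using assms by (auto intro!: tendsto_eq_intros)
  have lr: "((\<lambda>x. - (x powr (1-q) / (q-1))) \<longlongrightarrow> 0) at_top"
    using assms by real_asymp
  show "set_integrable lborel {r<..} (\<lambda>x. x powr (-q))"
    "(LINT x:{r<..}|lborel. x powr (-q)) = r powr (1-q) / (q-1)"
  proof -
    have c: "isCont (\<lambda>x. x powr (-q)) x" if "r < x" for x
      using that assms by (auto simp: isCont_def intro!: tendsto_eq_intros)
    show "set_integrable lborel {r<..} (\<lambda>x. x powr (-q))"
      "(LINT x:{r<..}|lborel. x powr (-q)) = r powr (1-q) / (q-1)"
      using ftc_Ioi[OF d c _ l0 lr] assms by auto
  qed
qed

lemma deriv_F1:
  fixes s R x :: real
  assumes "1/2 < s" "s < 1" "0 < R" "0 < x" "x < R"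
  shows "DERIV (\<lambda>x. ((R+x) powr (2 * s) + (R-x) powr (2 * s) - 2 * R powr (2 * s)) / (2 * s * R * x powr (2 * s))) x
     :> (2 * R powr (2 * s - 1) - (R+x) powr (2 * s - 1) - (R-x) powr (2 * s - 1)) / x powr (1 + 2 * s)"
proof -
  have pw: "y powr (2 * s) = y * y powr (2 * s - 1)" if "y > 0" for y :: real
    using that by (simp add: powr_mult_base)
  have pw2: "y powr (1 + 2 * s) = y * y * y powr (2 * s - 1)" if "y > 0" for y :: real
    using that by (simp add: powr_add[of y 1 "2 * s"] pw)
  have x1: "R + x > 0" "R - x > 0" using assms by auto
  show ?thesis
    using assms
    apply (auto intro!: derivative_eq_intros)
    apply (simp add: pw[OF x1(1)] pw[OF x1(2)] pw[OF assms(3)] pw[OF assms(4)] pw2[OF assms(4)])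
    apply (simp add: field_simps)
    done
qed

lemma split_Ioi:
  fixes f :: "real \<Rightarrow> real"
  assumes R: "R > 0" and i1: "set_integrable lborel {0<..<R} f" and i2: "set_integrable lborel {R<..} f"
  shows "set_integrable lborel {0<..} f"
    "(LINT x:{0<..}|lborel. f x) = (LINT x:{0<..<R}|lborel. f x) + (LINT x:{R<..}|lborel. f x)"
proof -
  have iu: "set_integrable lborel ({0<..<R} \<union> {R<..}) f"
    by (rule set_integrable_Un[OF i1 i2]) auto
  have d: "({0<..<R} \<union> {R<..} - {0<..}) \<union> ({0<..} - ({0<..<R} \<union> {R<..})) \<subseteq> {R}"
    using R by auto
  show "set_integrable lborel {0<..} f"
    using iu set_integrable_discrete_difference[of "{R}" "{0<..<R} \<union> {R<..}" "{0<..}" lborel f, OF _ d] by simp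
  have "(LINT x:{0<..}|lborel. f x) = (LINT x:{0<..<R} \<union> {R<..}|lborel. f x)"
    using set_integral_discrete_difference[of "{R}" "{0<..<R} \<union> {R<..}" "{0<..}" lborel f, OF _ d] by simp
  also have "\<dots> = (LINT x:{0<..<R}|lborel. f x) + (LINT x:{R<..}|lborel. f x)"
    by (rule set_integral_Un[OF _ i1 i2]) auto
  finally show "(LINT x:{0<..}|lborel. f x) = (LINT x:{0<..<R}|lborel. f x) + (LINT x:{R<..}|lborel. f x)" .
qed

lemma concave_pair:
  fixes s R x :: real
  assumes "1/2 < s" "s < 1" "0 < R" "0 < x" "x < R"
  shows "(R+x) powr (2 * s - 1) + (R-x) powr (2 * s - 1) \<le> 2 * R powr (2 * s - 1)"
proof -
  have y1: "(R+x) powr (2 * s - 1) * R powr (2 - 2 * s) \<le> (2 * s - 1) * (R+x) + (2 - 2 * s) * R"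
    using assms by (intro Youngs_inequality_0) auto
  have y2: "(R-x) powr (2 * s - 1) * R powr (2 - 2 * s) \<le> (2 * s - 1) * (R-x) + (2 - 2 * s) * R"
    using assms by (intro Youngs_inequality_0) auto
  have e: "R powr (2 * s - 1) * R powr (2 - 2 * s) = R"
    using assms by (simp add: powr_add[symmetric])
  have "((R+x) powr (2 * s - 1) + (R-x) powr (2 * s - 1)) * R powr (2 - 2 * s) \<le> (2 * R powr (2 * s - 1)) * R powr (2 - 2 * s)"
    using y1 y2 e by (simp add: algebra_simps)
  then show ?thesis using assms by (simp add: mult_le_cancel_right)
qed

lemma deriv_F2:
  fixes s R x :: real
  assumes "1/2 < s" "s < 1" "0 < R" "R < x"
  shows "DERIV (\<lambda>x. ((x-R) powr (2 * s) - (R+x) powr (2 * s)) / (2 * s * R * x powr (2 * s))) x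
     :> ((R+x) powr (2 * s - 1) + (x-R) powr (2 * s - 1)) / x powr (1 + 2 * s)"
proof -
  have pw: "y powr (2 * s) = y * y powr (2 * s - 1)" if "y > 0" for y :: real
    using that by (simp add: powr_mult_base)
  have pw2: "y powr (1 + 2 * s) = y * y * y powr (2 * s - 1)" if "y > 0" for y :: real
    using that by (simp add: powr_add[of y 1 "2 * s"] pw)
  have x1: "R + x > 0" "x - R > 0" "x > 0" using assms by auto
  show ?thesis
    using assms
    apply (auto intro!: derivative_eq_intros)
    apply (simp add: pw[OF x1(1)] pw[OF x1(2)] pw[OF assms(3)] pw[OF x1(3)] pw2[OF x1(3)])
    apply (simp add: field_simps)
    done
qed


lemma cone_integral:
  fixes s R :: real
  assumes s: "1/2 < s" "s < 1" and R: "0 < R"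
  defines "kf \<equiv> \<lambda>x. ((R+x) powr (2 * s - 1) + \<bar>R-x\<bar> powr (2 * s - 1) - 2 * R powr (2 * s - 1)) / x powr (1 + 2 * s)"
  shows "set_integrable lborel {0<..} kf" "(LINT x:{0<..}|lborel. kf x) = 0"
proof -
  define F1 where "F1 = (\<lambda>x. ((R+x) powr (2 * s) + (R-x) powr (2 * s) - 2 * R powr (2 * s)) / (2 * s * R * x powr (2 * s)))"
  define g1 where "g1 = (\<lambda>x. (2 * R powr (2 * s - 1) - (R+x) powr (2 * s - 1) - (R-x) powr (2 * s - 1)) / x powr (1 + 2 * s))"
  define F2 where "F2 = (\<lambda>x. ((x-R) powr (2 * s) - (R+x) powr (2 * s)) / (2 * s * R * x powr (2 * s)))"
  define g2 where "g2 = (\<lambda>x. ((R+x) powr (2 * s - 1) + (x-R) powr (2 * s - 1)) / x powr (1 + 2 * s))"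
  have l1a: "(F1 \<longlongrightarrow> 0) (at_right 0)"
    unfolding F1_def using s R by real_asymp
  have l1b: "(F1 \<longlongrightarrow> ((2 * R) powr (2 * s) - 2 * R powr (2 * s)) / (2 * s * R * R powr (2 * s))) (at_left R)"
    unfolding F1_def using s R by real_asymp (simp add: field_simps)
  have l2a: "(F2 \<longlongrightarrow> (- ((2 * R) powr (2 * s)) / (2 * s * R * R powr (2 * s)))) (at_right R)"
    unfolding F2_def using s R by real_asymp (simp add: field_simps)
  have l2b: "(F2 \<longlongrightarrow> 0) at_top"
    unfolding F2_def using s R by real_asymp
  have c1: "isCont g1 x" if "0 < x" "x < R" for x
    using that R unfolding g1_def by (auto simp: isCont_def intro!: tendsto_eq_intros)
  have c2: "isCont g2 x" if "R < x" for x
    using that R unfolding g2_def by (auto simp: isCont_def intro!: tendsto_eq_intros)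
  have p1: "0 \<le> g1 x" if "0 < x" "x < R" for x
    using concave_pair[OF s R that] that unfolding g1_def by (auto intro!: divide_nonneg_pos)
  have p2: "0 \<le> g2 x" if "R < x" for x
    using that R unfolding g2_def by (auto intro!: divide_nonneg_pos)
  have d1: "DERIV F1 x :> g1 x" if "0 < x" "x < R" for x
    unfolding F1_def g1_def by (rule deriv_F1[OF s R that])
  have d2: "DERIV F2 x :> g2 x" if "R < x" for x
    unfolding F2_def g2_def by (rule deriv_F2[OF s R that])
  note I1 = ftc_Ioo[OF R d1 c1 p1 l1a l1b]
  note I2 = ftc_Ioi[OF d2 c2 p2 l2a l2b]
  note I3 = int_pow_rinf[of "1 + 2 * s" R]
  have q3: "1 < 1 + 2 * s" using s by simp
  have e1: "set_integrable lborel {0<..<R} kf \<and> (LINT x:{0<..<R}|lborel. kf x) = - (LINT x:{0<..<R}|lborel. g1 x)"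
  proof -
    have "set_integrable lborel {0<..<R} (\<lambda>x. (-1) * g1 x)" using I1(1) by (intro set_integrable_mult_right)
    then have i: "set_integrable lborel {0<..<R} (\<lambda>x. - g1 x)" by simp
    have eq: "\<And>x. x \<in> {0<..<R} \<Longrightarrow> kf x = - g1 x"
      unfolding kf_def g1_def by (auto simp: field_simps)
    have "set_integrable lborel {0<..<R} kf" using i set_integrable_cong[of lborel lborel "{0<..<R}" "{0<..<R}" kf "\<lambda>x. - g1 x"] eq by simp
    moreover have "(LINT x:{0<..<R}|lborel. kf x) = (LINT x:{0<..<R}|lborel. - g1 x)"
      using eq by (intro set_lebesgue_integral_cong) auto
    ultimately show ?thesis using set_integral_uminus[OF I1(1)] by simp
  qed
  have e2: "set_integrable lborel {R<..} kf \<and> (LINT x:{R<..}|lborel. kf x) = (LINT x:{R<..}|lborel. g2 x) - 2 * R powr (2 * s - 1) * (LINT x:{R<..}|lborel. x powr (- (1 + 2 * s)))"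
  proof -
    have i3: "set_integrable lborel {R<..} (\<lambda>x. 2 * R powr (2 * s - 1) * x powr (- (1 + 2 * s)))"
      using I3(1)[OF q3 R] by (intro set_integrable_mult_right)
    have i: "set_integrable lborel {R<..} (\<lambda>x. g2 x - 2 * R powr (2 * s - 1) * x powr (- (1 + 2 * s)))"
      using I2(1) i3 by (rule set_integral_diff)
    have eq: "\<And>x. x \<in> {R<..} \<Longrightarrow> kf x = g2 x - 2 * R powr (2 * s - 1) * x powr (- (1 + 2 * s))"
      unfolding kf_def g2_def powr_minus_divide using R by (auto simp: field_simps)
    have "set_integrable lborel {R<..} kf" using i set_integrable_cong[of lborel lborel "{R<..}" "{R<..}" kf] eq by simp
    moreover have "(LINT x:{R<..}|lborel. kf x) = (LINT x:{R<..}|lborel. g2 x - 2 * R powr (2 * s - 1) * x powr (- (1 + 2 * s)))"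
      using eq by (intro set_lebesgue_integral_cong) auto
    moreover have "(LINT x:{R<..}|lborel. g2 x - 2 * R powr (2 * s - 1) * x powr (- (1 + 2 * s)))
       = (LINT x:{R<..}|lborel. g2 x) - 2 * R powr (2 * s - 1) * (LINT x:{R<..}|lborel. x powr (- (1 + 2 * s)))"
      using I2(1) i3 by (simp add: set_integral_diff)
    ultimately show ?thesis by simp
  qed
  note sp = split_Ioi[OF R conjunct1[OF e1] conjunct1[OF e2]]
  show "set_integrable lborel {0<..} kf" by (rule sp(1))
  have "(LINT x:{0<..}|lborel. kf x) = - (((2 * R) powr (2 * s) - 2 * R powr (2 * s)) / (2 * s * R * R powr (2 * s)) - 0)
     + ((0 - (- ((2 * R) powr (2 * s)) / (2 * s * R * R powr (2 * s)))) - 2 * R powr (2 * s - 1) * (R powr (1 - (1 + 2 * s)) / (1 + 2 * s - 1)))"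
    using sp(2) e1 e2 I1(2) I2(2) I3(2)[OF q3 R] by simp
  also have "\<dots> = 0"
  proof -
    have a: "R powr (2 * s - 1) * R powr (1 - (1 + 2 * s)) = 1 / R"
    proof -
      have "R powr (2 * s - 1) = R powr (2 * s) / R" using R by (simp add: powr_diff)
      moreover have "R powr (1 - (1 + 2 * s)) = 1 / R powr (2 * s)" by (simp add: powr_minus_divide)
      ultimately show ?thesis using R by simp
    qed
    have "R powr (2 * s) > 0" using R by simp
    then show ?thesis using a s R by (simp add: field_simps)
  qed
  finally show "(LINT x:{0<..}|lborel. kf x) = 0" .
qed

lemma taylor_powr:
  fixes b t0 t :: real
  assumes b: "0 < b" "b < 1" and t0: "0 < t0" and t: "t0/4 \<le> t" "t \<le> 4 * t0"
  shows "\<bar>t powr b - t0 powr b - b * t0 powr (b - 1) * (t - t0)\<bar> \<le> (t0/4) powr (b - 2) * (t - t0)^2"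
proof (cases "t = t0")
  case True then show ?thesis by simp
next
  case False
  define diff where "diff = (\<lambda>n::nat. if n = 0 then (\<lambda>t::real. t powr b) else if n = 1 then (\<lambda>t. b * t powr (b - 1)) else (\<lambda>t. b * (b - 1) * t powr (b - 2)))"
  have D: "\<forall>m t. m < 2 \<and> t0/4 \<le> t \<and> t \<le> 4 * t0 \<longrightarrow> DERIV (diff m) t :> diff (Suc m) t"
  proof (intro allI impI)
    fix m :: nat and t :: real assume a: "m < 2 \<and> t0/4 \<le> t \<and> t \<le> 4 * t0"
    then have tp: "t > 0" using t0 by auto
    consider "m = 0" | "m = 1" using a by linarith
    then show "DERIV (diff m) t :> diff (Suc m) t"
    proof cases
      case 1 then show ?thesis unfolding diff_def using has_real_derivative_powr[OF tp, of b] by simp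
    next
      case 2
      have "DERIV (\<lambda>t. b * t powr (b - 1)) t :> b * ((b - 1) * t powr (b - 1 - 1))"
        by (intro DERIV_cmult has_real_derivative_powr tp)
      then show ?thesis unfolding diff_def using 2 by (simp add: algebra_simps)
    qed
  qed
  obtain xi where xi: "(if t < t0 then t < xi \<and> xi < t0 else t0 < xi \<and> xi < t)"
    and eq: "diff 0 t = (\<Sum>m<2. diff m t0 / fact m * (t - t0) ^ m) + diff 2 xi / fact 2 * (t - t0) ^ 2"
    using Taylor[of 2 diff "\<lambda>t. t powr b" "t0/4" "4 * t0" t0 t] D t t0 False
    by (auto simp: diff_def)
  have xi4: "t0/4 \<le> xi" using xi t t0 by (auto split: if_splits)
  have eq2: "t powr b - t0 powr b - b * t0 powr (b - 1) * (t - t0) = b * (b - 1) * xi powr (b - 2) / 2 * (t - t0)^2"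
    using eq by (simp add: diff_def numeral_2_eq_2)
  have "\<bar>b * (b - 1) * xi powr (b - 2) / 2\<bar> \<le> xi powr (b - 2)"
  proof -
    have h1: "b * (1 - b) \<le> 1 * 1" using b by (intro mult_mono) auto
    have "\<bar>b * (b - 1)\<bar> = b * (1 - b)" using b by (simp add: abs_mult)
    then have "\<bar>b * (b - 1)\<bar> \<le> 1" using h1 by simp
    then have "\<bar>b * (b - 1)\<bar> * xi powr (b - 2) \<le> 1 * xi powr (b - 2)"
      by (intro mult_right_mono) auto
    then show ?thesis using powr_ge_zero[of xi "b - 2"] by (simp only: abs_mult abs_divide)
  qed
  also have "xi powr (b - 2) \<le> (t0/4) powr (b - 2)"
    using xi4 t0 b by (intro powr_mono2') auto
  finally have "\<bar>b * (b - 1) * xi powr (b - 2) / 2\<bar> * (t - t0)^2 \<le> (t0/4) powr (b - 2) * (t - t0)^2"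
    by (intro mult_right_mono) auto
  then show ?thesis unfolding eq2 by (simp add: abs_mult)
qed


lemma norm_taylor:
  fixes w h :: "'a::euclidean_space" and a :: real
  assumes a: "0 < a" "a < 1" and w: "w \<noteq> 0" and h: "norm h < norm w / 2"
  shows "\<bar>norm (w+h) powr a - norm w powr a - a * norm w powr (a - 2) * (w \<bullet> h)\<bar>
     \<le> ((norm w ^ 2 / 4) powr (a/2 - 2) * 9 * norm w ^ 2 + a/2 * norm w powr (a - 2)) * norm h ^ 2"
proof -
  define t0 where "t0 = norm w ^ 2"
  define t where "t = norm (w+h) ^ 2"
  define b where "b = a / 2"
  have nw: "norm w > 0" using w by simp
  have nwh: "norm (w+h) \<ge> norm w / 2" using norm_triangle_ineq2[of w "-h"] h by simp
  have nwh2: "norm (w+h) \<le> 2 * norm w" using norm_triangle_ineq[of w h] h norm_ge_zero[of w] by linarith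
  have np: "norm x powr a = (norm x ^ 2) powr b" if "x \<noteq> 0" for x :: 'a
  proof -
    have "(norm x ^ 2) powr b = (norm x powr 2) powr b" using that by (simp add: powr_numeral)
    also have "\<dots> = norm x powr a" unfolding powr_powr b_def by simp
    finally show ?thesis by simp
  qed
  have wh0: "w + h \<noteq> 0" using nwh nw by auto
  have teq: "t = t0 + 2 * (w \<bullet> h) + norm h ^ 2"
    unfolding t_def t0_def by (simp add: power2_norm_eq_inner inner_add_left inner_add_right inner_commute)
  have t0p: "t0 > 0" using nw unfolding t0_def by simp
  have tl: "t0/4 \<le> t"
  proof -
    have "(norm w / 2)^2 \<le> norm (w+h)^2" using nwh nw by (intro power_mono) auto
    then show ?thesis unfolding t_def t0_def by (simp add: power_divide)
  qed
  have tu: "t \<le> 4 * t0"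
  proof -
    have "norm (w+h)^2 \<le> (2 * norm w)^2" using nwh2 by (intro power_mono) auto
    then show ?thesis unfolding t_def t0_def by (simp add: power_mult_distrib)
  qed
  have b: "0 < b" "b < 1" using a unfolding b_def by auto
  note T = taylor_powr[OF b t0p tl tu]
  have dd: "\<bar>t - t0\<bar> \<le> 3 * norm w * norm h"
  proof -
    have cs: "\<bar>w \<bullet> h\<bar> \<le> norm w * norm h" by (rule Cauchy_Schwarz_ineq2)
    have c1: "w \<bullet> h \<le> norm w * norm h" using abs_le_D1[OF cs] .
    have c2: "- (w \<bullet> h) \<le> norm w * norm h" using abs_le_D2[OF cs] .
    have n2: "norm h ^ 2 \<le> norm w * norm h" unfolding power2_eq_square using h norm_ge_zero[of h] by (intro mult_right_mono; linarith)
    have n0: "0 \<le> norm h ^ 2" by simp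
    have e: "t - t0 = 2 * (w \<bullet> h) + norm h ^ 2" using teq by simp
    have u1: "2 * (w \<bullet> h) + norm h ^ 2 \<le> 3 * (norm w * norm h)" using c1 n2 by linarith
    have u2: "- (2 * (w \<bullet> h) + norm h ^ 2) \<le> 3 * (norm w * norm h)" using c2 n0 n2 by linarith
    show ?thesis unfolding e mult.assoc by (rule abs_leI[OF u1 u2])
  qed
  have dd2: "(t - t0)^2 \<le> 9 * norm w ^ 2 * norm h ^ 2"
  proof -
    have "(t - t0)^2 = \<bar>t - t0\<bar>^2" by simp
    also have "\<dots> \<le> (3 * norm w * norm h)^2" using dd by (intro power_mono) auto
    finally show ?thesis by (simp add: power_mult_distrib)
  qed
  have sq: "(norm w ^ 2) powr c = norm w powr (2 * c)" for c
  proof -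
    have "(norm w ^ 2) powr c = (norm w powr 2) powr c" using nw by (simp add: powr_numeral)
    also have "\<dots> = norm w powr (2 * c)" unfolding powr_powr by simp
    finally show ?thesis .
  qed
  have t0b: "t0 powr (b - 1) = norm w powr (a - 2)"
    unfolding t0_def sq b_def by (simp add: algebra_simps)
  define E where "E = t powr b - t0 powr b - b * t0 powr (b - 1) * (t - t0)"
  define X where "X = b * norm w powr (a - 2) * norm h ^ 2"
  have Q: "norm (w+h) powr a - norm w powr a - a * norm w powr (a - 2) * (w \<bullet> h) = E + X"
    unfolding np[OF wh0] np[OF w] t_def[symmetric] t0_def[symmetric] E_def X_def t0b teq b_def
    using t0b[unfolded b_def] by (simp add: algebra_simps)
  have X0: "0 \<le> X" unfolding X_def using b by simp
  have "\<bar>norm (w+h) powr a - norm w powr a - a * norm w powr (a - 2) * (w \<bullet> h)\<bar> \<le> \<bar>E\<bar> + \<bar>X\<bar>"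
    unfolding Q by (rule abs_triangle_ineq)
  also have "\<bar>X\<bar> = X" using X0 by (rule abs_of_nonneg)
  also have "\<bar>E\<bar> + X \<le> (t0/4) powr (b - 2) * (t - t0)^2 + X" using T unfolding E_def by (rule add_right_mono)
  also have "\<dots> \<le> (t0/4) powr (b - 2) * (9 * norm w ^ 2 * norm h ^ 2) + X"
    using dd2 by (intro add_right_mono mult_left_mono) auto
  also have "\<dots> = ((norm w ^ 2 / 4) powr (a/2 - 2) * 9 * norm w ^ 2 + a/2 * norm w powr (a - 2)) * norm h ^ 2"
    unfolding t0_def b_def X_def by (simp add: algebra_simps)
  finally show ?thesis .
qed

lemma cone_c11:
  fixes y x0 :: "'a::euclidean_space" and a L eps A :: real
  assumes a: "0 < a" "a < 1" and L: "L \<ge> 0" and eps: "eps \<ge> 0" and xy: "x0 \<noteq> y"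
  shows "c11_grad (\<lambda>x. A + L * norm (x - y) powr a + eps * norm (x - x0) ^ 2) x0
           ((L * a * norm (x0 - y) powr (a - 2)) *\<^sub>R (x0 - y))"
proof -
  define w where "w = x0 - y"
  have w: "w \<noteq> 0" using xy unfolding w_def by simp
  define K where "K = (norm w ^ 2 / 4) powr (a/2 - 2) * 9 * norm w ^ 2 + a/2 * norm w powr (a - 2)"
  have K0: "K \<ge> 0" unfolding K_def using a by simp
  show ?thesis unfolding c11_grad_def
  proof (intro exI conjI allI impI)
    show "L * K + eps + 1 > 0" using K0 L eps by (simp add: add_nonneg_pos)
    show "norm w / 2 > 0" using w by simp
    fix h :: 'a assume h: "norm h < norm w / 2"
    have e: "(\<lambda>x. A + L * norm (x - y) powr a + eps * norm (x - x0) ^ 2) (x0 + h) - (\<lambda>x. A + L * norm (x - y) powr a + eps * norm (x - x0) ^ 2) x0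
       - ((L * a * norm (x0 - y) powr (a - 2)) *\<^sub>R (x0 - y)) \<bullet> h
       = L * (norm (w+h) powr a - norm w powr a - a * norm w powr (a - 2) * (w \<bullet> h)) + eps * norm h ^ 2"
      unfolding w_def by (simp add: algebra_simps)
    have "\<bar>L * (norm (w+h) powr a - norm w powr a - a * norm w powr (a - 2) * (w \<bullet> h)) + eps * norm h ^ 2\<bar>
        \<le> L * (K * norm h ^ 2) + eps * norm h ^ 2"
    proof -
      have "\<bar>L * (norm (w+h) powr a - norm w powr a - a * norm w powr (a - 2) * (w \<bullet> h))\<bar> \<le> L * (K * norm h ^ 2)"
        unfolding abs_mult using norm_taylor[OF a w h] L unfolding K_def by (simp add: mult_left_mono)
      moreover have "0 \<le> eps * norm h ^ 2" using eps by simp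
      ultimately show ?thesis by (simp add: abs_le_iff)
    qed
    also have "\<dots> \<le> (L * K + eps + 1) * norm h ^ 2" by (simp add: algebra_simps)
    finally show "\<bar>(\<lambda>x. A + L * norm (x - y) powr a + eps * norm (x - x0) ^ 2) (x0 + h) - (\<lambda>x. A + L * norm (x - y) powr a + eps * norm (x - x0) ^ 2) x0
       - ((L * a * norm (x0 - y) powr (a - 2)) *\<^sub>R (x0 - y)) \<bullet> h\<bar> \<le> (L * K + eps + 1) * (norm h)\<^sup>2"
      unfolding e .
  qed
qed

lemma c11_unique:
  assumes P: "c11_grad \<phi> x p" and Q: "c11_grad \<phi> x q"
  shows "p = q"
proof (rule ccontr)
  assume pq: "p \<noteq> q"
  obtain M1 e1 where M1: "M1 > 0" "e1 > 0" "\<And>h. norm h < e1 \<Longrightarrow> \<bar>\<phi> (x + h) - \<phi> x - p \<bullet> h\<bar> \<le> M1 * (norm h)\<^sup>2"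
    using P unfolding c11_grad_def by blast
  obtain M2 e2 where M2: "M2 > 0" "e2 > 0" "\<And>h. norm h < e2 \<Longrightarrow> \<bar>\<phi> (x + h) - \<phi> x - q \<bullet> h\<bar> \<le> M2 * (norm h)\<^sup>2"
    using Q unfolding c11_grad_def by blast
  define d where "d = p - q"
  have nd: "norm d > 0" using pq unfolding d_def by simp
  define t where "t = min (min (e1 / (2 * norm d)) (e2 / (2 * norm d))) (1 / (2 * (M1 + M2)))"
  have t0: "t > 0" unfolding t_def using nd M1 M2 by auto
  have nh: "norm (t *\<^sub>R d) = t * norm d" using t0 by simp
  have te1: "t * norm d < e1"
  proof -
    have "t \<le> e1 / (2 * norm d)" unfolding t_def by simp
    then have "t * norm d \<le> e1 / 2" using nd by (simp add: field_simps)
    then show ?thesis using M1 by simp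
  qed
  have te2: "t * norm d < e2"
  proof -
    have "t \<le> e2 / (2 * norm d)" unfolding t_def by simp
    then have "t * norm d \<le> e2 / 2" using nd by (simp add: field_simps)
    then show ?thesis using M2 by simp
  qed
  have a1: "\<bar>\<phi> (x + t *\<^sub>R d) - \<phi> x - p \<bullet> (t *\<^sub>R d)\<bar> \<le> M1 * (t * norm d)\<^sup>2"
    using M1(3)[of "t *\<^sub>R d"] nh te1 t0 by (simp add: abs_of_pos)
  have a2: "\<bar>\<phi> (x + t *\<^sub>R d) - \<phi> x - q \<bullet> (t *\<^sub>R d)\<bar> \<le> M2 * (t * norm d)\<^sup>2"
    using M2(3)[of "t *\<^sub>R d"] nh te2 t0 by (simp add: abs_of_pos)
  have ip: "p \<bullet> (t *\<^sub>R d) - q \<bullet> (t *\<^sub>R d) = t * (norm d)\<^sup>2"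
    unfolding d_def by (simp add: power2_norm_eq_inner inner_diff_left inner_diff_right algebra_simps)
  have "t * (norm d)\<^sup>2 \<le> (M1 + M2) * (t * norm d)\<^sup>2"
    using a1 a2 ip by (simp add: abs_le_iff algebra_simps)
  then have "t * (norm d)\<^sup>2 * 1 \<le> t * (norm d)\<^sup>2 * ((M1 + M2) * t)"
    by (simp add: power_mult_distrib algebra_simps power2_eq_square)
  then have "1 \<le> (M1 + M2) * t" using t0 nd by (simp add: mult_le_cancel_left_pos)
  moreover have "(M1 + M2) * t \<le> 1/2"
  proof -
    have "t \<le> 1 / (2 * (M1 + M2))" unfolding t_def by simp
    then show ?thesis using M1 M2 by (simp add: field_simps)
  qed
  ultimately show False by simp
qed

lemma grad_at_eq: "c11_grad \<phi> x p \<Longrightarrow> grad_at \<phi> x = p"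
  unfolding grad_at_def by (rule the_equality) (auto intro: c11_unique)

lemma c11_glue:
  assumes "c11_grad \<phi> x0 p" "r > 0"
  shows "c11_grad (\<lambda>x. if x \<in> ball x0 r then \<phi> x else u x) x0 p"
proof -
  obtain M e where M: "M > 0" "e > 0" "\<And>h. norm h < e \<Longrightarrow> \<bar>\<phi> (x0 + h) - \<phi> x0 - p \<bullet> h\<bar> \<le> M * (norm h)\<^sup>2"
    using assms(1) unfolding c11_grad_def by blast
  show ?thesis unfolding c11_grad_def
    apply (rule exI[of _ M], rule exI[of _ "min e r"])
    using M assms(2) by (auto simp: dist_norm)
qed

lemma c11_neg:
  assumes "c11_grad \<phi> x p"
  shows "c11_grad (\<lambda>z. - \<phi> z) x (- p)"
proof -
  have e: "\<bar>- \<phi> (x + h) - - \<phi> x - (- p) \<bullet> h\<bar> = \<bar>\<phi> (x + h) - \<phi> x - p \<bullet> h\<bar>" for h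
    by (simp add: abs_minus_commute algebra_simps)
  show ?thesis using assms unfolding c11_grad_def e by simp
qed

lemma neg_arith: "- (b::real) + - a - 2 * - c = - (a + b - 2 * c)" by simp

lemma lap_neg:
  assumes "c11_grad g x q" "q \<noteq> 0"
  shows "inf_frac_lap s (\<lambda>z. - g z) x = - inf_frac_lap s g x"
proof -
  have g1: "grad_at g x = q" by (rule grad_at_eq[OF assms(1)])
  have g2: "grad_at (\<lambda>z. - g z) x = - q" by (rule grad_at_eq[OF c11_neg[OF assms(1)]])
  have "(LINT \<eta>:{0<..}|lborel. (- g (x + \<eta> *\<^sub>R (- q /\<^sub>R norm q)) + - g (x - \<eta> *\<^sub>R (- q /\<^sub>R norm q)) - 2 * - g x) / \<eta> powr (1 + 2 * s))
     = (LINT \<eta>:{0<..}|lborel. - ((g (x + \<eta> *\<^sub>R (q /\<^sub>R norm q)) + g (x - \<eta> *\<^sub>R (q /\<^sub>R norm q)) - 2 * g x) / \<eta> powr (1 + 2 * s)))"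
  proof (intro arg_cong[where f="set_lebesgue_integral lborel {0<..}"] ext)
    fix \<eta> :: real
    have 1: "x + \<eta> *\<^sub>R (- q /\<^sub>R norm q) = x - \<eta> *\<^sub>R (q /\<^sub>R norm q)"
      "x - \<eta> *\<^sub>R (- q /\<^sub>R norm q) = x + \<eta> *\<^sub>R (q /\<^sub>R norm q)"
      by (simp_all only: scaleR_minus_right diff_conv_add_uminus minus_minus)
    have 2: "- g (x - \<eta> *\<^sub>R (q /\<^sub>R norm q)) + - g (x + \<eta> *\<^sub>R (q /\<^sub>R norm q)) - 2 * - g x
       = - (g (x + \<eta> *\<^sub>R (q /\<^sub>R norm q)) + g (x - \<eta> *\<^sub>R (q /\<^sub>R norm q)) - 2 * g x)" by (rule neg_arith)
    show "(- g (x + \<eta> *\<^sub>R (- q /\<^sub>R norm q)) + - g (x - \<eta> *\<^sub>R (- q /\<^sub>R norm q)) - 2 * - g x) / \<eta> powr (1 + 2 * s)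
     = - ((g (x + \<eta> *\<^sub>R (q /\<^sub>R norm q)) + g (x - \<eta> *\<^sub>R (q /\<^sub>R norm q)) - 2 * g x) / \<eta> powr (1 + 2 * s))"
      unfolding 1 2 minus_divide_left ..
  qed
  also have "\<dots> = - (LINT \<eta>:{0<..}|lborel. (g (x + \<eta> *\<^sub>R (q /\<^sub>R norm q)) + g (x - \<eta> *\<^sub>R (q /\<^sub>R norm q)) - 2 * g x) / \<eta> powr (1 + 2 * s))"
    unfolding set_lebesgue_integral_def scaleR_minus_right integral_minus by (rule refl)
  finally show ?thesis unfolding inf_frac_lap_def g1 g2 Let_def using assms(2) by simp
qed

lemma set_integrable_cont_bound:
  fixes D Bd :: "real \<Rightarrow> real"
  assumes S: "open S" and c: "continuous_on S D" and i: "set_integrable lborel S Bd"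
    and b: "\<And>x. x \<in> S \<Longrightarrow> \<bar>D x\<bar> \<le> Bd x"
  shows "set_integrable lborel S D"
proof (rule set_integrable_bound[OF i])
  show "set_borel_measurable lborel S D"
    unfolding set_borel_measurable_def using borel_measurable_continuous_on_indicator[OF _ c] S by simp
  show "AE x in lborel. x \<in> S \<longrightarrow> norm (D x) \<le> norm (Bd x)"
    using b by (auto intro!: AE_I2 order_trans[OF _ abs_ge_self])
qed

lemma cont_norm_powr:
  fixes y :: "'a::real_normed_vector"
  assumes "a > 0"
  shows "continuous_on UNIV (\<lambda>x. norm (x - y) powr a)"
  by (rule continuous_on_powr') (use assms in \<open>auto intro!: continuous_intros\<close>)

lemma cone_comparison:
  fixes u :: "'a::euclidean_space \<Rightarrow> real" and \<Omega> :: "'a set" and y :: 'a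
  assumes s: "1/2 < s" "s < 1" and bdd: "bounded \<Omega>" and cont: "continuous_on UNIV u"
    and L: "L > 0"
    and bnd: "\<And>w. w \<notin> \<Omega> \<Longrightarrow> \<bar>u w - a\<bar> \<le> L * norm (w - y) powr (2 * s - 1)"
    and yin: "y \<in> \<Omega> \<Longrightarrow> u y = a"
    and sub: "\<And>x0 r \<phi> p. x0 \<in> \<Omega> \<Longrightarrow> x0 \<noteq> y \<Longrightarrow> r > 0 \<Longrightarrow> c11_grad \<phi> x0 p \<Longrightarrow> p \<noteq> 0
       \<Longrightarrow> continuous_on (cball x0 r) \<phi> \<Longrightarrow> \<phi> x0 = u x0 \<Longrightarrow> (\<forall>x\<in>ball x0 r - {x0}. \<phi> x > u x)
       \<Longrightarrow> inf_frac_lap s (\<lambda>x. if x \<in> ball x0 r then \<phi> x else u x) x0 \<ge> 0"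
  shows "u x \<le> a + L * norm (x - y) powr (2 * s - 1)"
proof (rule ccontr)
  assume nx: "\<not> u x \<le> a + L * norm (x - y) powr (2 * s - 1)"
  have al: "0 < 2 * s - 1" "2 * s - 1 < 1" using s by auto
  define g where "g = (\<lambda>z. u z - a - L * norm (z - y) powr (2 * s - 1))"
  have gx: "g x > 0" using nx unfolding g_def by simp
  have gout: "g z \<le> 0" if "z \<notin> \<Omega>" for z
    using bnd[OF that] unfolding g_def by (simp add: abs_le_iff)
  have xO: "x \<in> \<Omega>" using gout[of x] gx by force
  have gc: "continuous_on UNIV g"
    unfolding g_def by (intro continuous_intros cont cont_norm_powr al)
  obtain x0 where x0c: "x0 \<in> closure \<Omega>" and x0m: "\<And>z. z \<in> closure \<Omega> \<Longrightarrow> g z \<le> g x0"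
    using continuous_attains_sup[of "closure \<Omega>" g] bdd xO gc
    by (metis compact_closure closure_subset continuous_on_subset empty_iff subset_UNIV subsetD)
  define c where "c = g x0"
  have c0: "c > 0" using x0m[of x] xO closure_subset gx unfolding c_def by force
  have gle: "g z \<le> c" for z
  proof (cases "z \<in> closure \<Omega>")
    case True then show ?thesis using x0m unfolding c_def by simp
  next
    case False then have "z \<notin> \<Omega>" using closure_subset by blast
    then show ?thesis using gout c0 by force
  qed
  have x0O: "x0 \<in> \<Omega>" using gout[of x0] c0 unfolding c_def by force
  have x0y: "x0 \<noteq> y"
  proof
    assume "x0 = y"
    then have "g x0 = 0" using yin x0O al unfolding g_def by simp
    then show False using c0 unfolding c_def by simp
  qed
  define w where "w = x0 - y"
  define R where "R = norm w"
  have R0: "R > 0" using x0y unfolding R_def w_def by simp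
  obtain B where B: "B > 0" "\<Omega> \<subseteq> ball x0 B" using bounded_subset_ballD[OF bdd] by blast
  define r where "r = B + R"
  have r0: "r > 0" and rR: "R \<le> r" using B R0 unfolding r_def by auto
  have Or: "\<Omega> \<subseteq> ball x0 r" using B(2) R0 unfolding r_def by (auto simp: subset_eq)
  define K1 where "K1 = r powr (1 - 2 * s + 1) / (1 - 2 * s + 1)"
  define K2 where "K2 = r powr (1 - (1 + 2 * s)) / (1 + 2 * s - 1)"
  have K1p: "K1 > 0" and K2p: "K2 > 0" unfolding K1_def K2_def using s r0 by auto
  define eps where "eps = c * K2 / (2 * K1)"
  have eps0: "eps > 0" unfolding eps_def using c0 K1p K2p by simp
  define A where "A = a + c"
  define \<phi> where "\<phi> = (\<lambda>x. A + L * norm (x - y) powr (2 * s - 1) + eps * norm (x - x0) ^ 2)"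
  define k where "k = L * (2 * s - 1) * norm (x0 - y) powr (2 * s - 1 - 2)"
  define p where "p = k *\<^sub>R (x0 - y)"
  have k0: "k > 0" unfolding k_def using L al x0y by simp
  have c11: "c11_grad \<phi> x0 p"
    unfolding \<phi>_def p_def k_def by (rule cone_c11[OF al _ _ x0y]) (use L eps0 in auto)
  have p0: "p \<noteq> 0" unfolding p_def using k0 x0y by simp
  have \<phi>c: "continuous_on UNIV \<phi>"
    unfolding \<phi>_def by (intro continuous_intros cont_norm_powr al)
  have \<phi>x0: "\<phi> x0 = u x0"
    unfolding \<phi>_def A_def c_def g_def by simp
  have \<phi>gt: "\<forall>z\<in>ball x0 r - {x0}. \<phi> z > u z"
  proof
    fix z assume "z \<in> ball x0 r - {x0}"
    then have "eps * norm (z - x0) ^ 2 > 0" using eps0 by simp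
    moreover have "g z \<le> c" by (rule gle)
    ultimately show "\<phi> z > u z" unfolding \<phi>_def A_def g_def by simp
  qed
  define \<psi> where "\<psi> = (\<lambda>x. if x \<in> ball x0 r then \<phi> x else u x)"
  have lap: "inf_frac_lap s \<psi> x0 \<ge> 0"
    unfolding \<psi>_def by (rule sub[OF x0O x0y r0 c11 p0 continuous_on_subset[OF \<phi>c] \<phi>x0 \<phi>gt]) simp
  have gr: "grad_at \<psi> x0 = p" unfolding \<psi>_def by (rule grad_at_eq[OF c11_glue[OF c11 r0]])
  define v where "v = w /\<^sub>R R"
  have pv: "p /\<^sub>R norm p = v"
    unfolding p_def v_def R_def w_def using k0 by simp
  define H where "H = (\<lambda>\<eta>. (\<psi> (x0 + \<eta> *\<^sub>R v) + \<psi> (x0 - \<eta> *\<^sub>R v) - 2 * \<psi> x0) / \<eta> powr (1 + 2 * s))"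
  have lapH: "inf_frac_lap s \<psi> x0 = (LINT \<eta>:{0<..}|lborel. H \<eta>)"
    unfolding inf_frac_lap_def gr pv H_def Let_def using p0 by simp
  define kf where "kf = (\<lambda>x. ((R+x) powr (2 * s - 1) + \<bar>R-x\<bar> powr (2 * s - 1) - 2 * R powr (2 * s - 1)) / x powr (1 + 2 * s))"
  note CI = cone_integral[OF s R0, folded kf_def]
  define D where "D = (\<lambda>\<eta>. H \<eta> - L * kf \<eta>)"
  have nv: "norm v = 1" unfolding v_def R_def using R0 R_def by simp
  have zp: "x0 + \<eta> *\<^sub>R v - y = ((R + \<eta>) / R) *\<^sub>R w" for \<eta>
  proof -
    have 1: "\<eta> *\<^sub>R v = (\<eta> / R) *\<^sub>R w" unfolding v_def by (simp add: divide_inverse)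
    have 2: "((R + \<eta>) / R) *\<^sub>R w = w + (\<eta> / R) *\<^sub>R w"
      using R0 by (simp add: add_divide_distrib scaleR_add_left)
    show ?thesis unfolding 1 2 by (simp add: w_def algebra_simps)
  qed
  have zm: "x0 - \<eta> *\<^sub>R v - y = ((R - \<eta>) / R) *\<^sub>R w" for \<eta>
    using zp[of "- \<eta>"] by simp
  have nzp: "norm (x0 + \<eta> *\<^sub>R v - y) = R + \<eta>" if "\<eta> > 0" for \<eta>
    unfolding zp using R0 that by (simp add: R_def[symmetric] abs_of_pos)
  have nzm: "norm (x0 - \<eta> *\<^sub>R v - y) = \<bar>R - \<eta>\<bar>" for \<eta>
    unfolding zm using R0 by (simp add: R_def[symmetric] abs_divide)
  have dzp: "dist x0 (x0 + \<eta> *\<^sub>R v) = \<eta>" "dist x0 (x0 - \<eta> *\<^sub>R v) = \<eta>" if "\<eta> > 0" for \<eta>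
    using nv that by (simp_all add: dist_norm)
  have \<psi>x0: "\<psi> x0 = A + L * R powr (2 * s - 1)"
    unfolding \<psi>_def \<phi>_def using r0 by (simp add: R_def w_def)
  have Dlow: "D \<eta> = 2 * eps * \<eta> powr (1 - 2 * s)" if "0 < \<eta>" "\<eta> < r" for \<eta>
  proof -
    have inb: "x0 + \<eta> *\<^sub>R v \<in> ball x0 r" "x0 - \<eta> *\<^sub>R v \<in> ball x0 r" using dzp[OF that(1)] that by auto
    have n2: "norm (x0 + \<eta> *\<^sub>R v - x0) = \<eta>" "norm (x0 - \<eta> *\<^sub>R v - x0) = \<eta>" using nv that by auto
    have "H \<eta> = (L * ((R+\<eta>) powr (2 * s - 1) + \<bar>R-\<eta>\<bar> powr (2 * s - 1) - 2 * R powr (2 * s - 1)) + 2 * eps * \<eta>^2) / \<eta> powr (1 + 2 * s)"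
      unfolding H_def \<psi>x0 using inb unfolding \<psi>_def \<phi>_def using nzp[OF that(1)] nzm n2
      by (simp add: algebra_simps)
    then have "D \<eta> = 2 * eps * \<eta>^2 / \<eta> powr (1 + 2 * s)"
      unfolding D_def kf_def using that by (simp add: field_simps)
    also have "\<dots> = 2 * eps * \<eta> powr (1 - 2 * s)"
    proof -
      have "\<eta> powr (1 - 2 * s) = \<eta> powr (2 - (1 + 2 * s))"
        by (rule arg_cong[where f="\<lambda>t. \<eta> powr t"]) simp
      also have "\<dots> = \<eta> powr 2 / \<eta> powr (1 + 2 * s)" by (rule powr_diff)
      finally have "\<eta> powr (1 - 2 * s) = \<eta> powr 2 / \<eta> powr (1 + 2 * s)" .
      then show ?thesis using that by (simp add: powr_numeral)
    qed
    finally show ?thesis .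
  qed
  have Dhigh: "D \<eta> = ((u (x0 + \<eta> *\<^sub>R v) - a - L * (R+\<eta>) powr (2 * s - 1)) + (u (x0 - \<eta> *\<^sub>R v) - a - L * \<bar>R-\<eta>\<bar> powr (2 * s - 1)) - 2 * c) / \<eta> powr (1 + 2 * s)"
    if "r < \<eta>" for \<eta>
  proof -
    have "x0 + \<eta> *\<^sub>R v \<notin> ball x0 r" "x0 - \<eta> *\<^sub>R v \<notin> ball x0 r" using dzp[of \<eta>] that r0 by auto
    then have "\<psi> (x0 + \<eta> *\<^sub>R v) = u (x0 + \<eta> *\<^sub>R v)" "\<psi> (x0 - \<eta> *\<^sub>R v) = u (x0 - \<eta> *\<^sub>R v)"
      unfolding \<psi>_def by auto
    then show ?thesis unfolding D_def H_def kf_def \<psi>x0 A_def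
      by (simp add: add_divide_distrib diff_divide_distrib algebra_simps)
  qed
  have out: "x0 + \<eta> *\<^sub>R v \<notin> \<Omega>" "x0 - \<eta> *\<^sub>R v \<notin> \<Omega>" if "r < \<eta>" for \<eta>
    using Or dzp[of \<eta>] that r0 by (auto simp: subset_eq)
  have Dup: "D \<eta> \<le> -2 * c * \<eta> powr (- (1 + 2 * s))" if "r < \<eta>" for \<eta>
  proof -
    have e0: "\<eta> > 0" using that r0 by simp
    have "u (x0 + \<eta> *\<^sub>R v) - a - L * (R+\<eta>) powr (2 * s - 1) \<le> 0"
      using bnd[OF out(1)[OF that]] nzp[OF e0] by (simp add: abs_le_iff)
    moreover have "u (x0 - \<eta> *\<^sub>R v) - a - L * \<bar>R-\<eta>\<bar> powr (2 * s - 1) \<le> 0"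
      using bnd[OF out(2)[OF that]] nzm by (simp add: abs_le_iff)
    ultimately have "D \<eta> \<le> (- 2 * c) / \<eta> powr (1 + 2 * s)"
      unfolding Dhigh[OF that] using e0 by (intro divide_right_mono) auto
    then show ?thesis unfolding powr_minus_divide by simp
  qed
  define Bd where "Bd = (\<lambda>\<eta>::real. 4 * L * 2 powr (2 * s - 1) * \<eta> powr (- 2) + 2 * c * \<eta> powr (- (1 + 2 * s)))"
  have Dabs: "\<bar>D \<eta>\<bar> \<le> Bd \<eta>" if "r < \<eta>" for \<eta>
  proof -
    have e0: "\<eta> > 0" using that r0 by simp
    have m1: "(R+\<eta>) powr (2 * s - 1) \<le> (2 * \<eta>) powr (2 * s - 1)"
      using rR that R0 al by (intro powr_mono2) auto
    have m2: "\<bar>R-\<eta>\<bar> powr (2 * s - 1) \<le> (2 * \<eta>) powr (2 * s - 1)"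
      using rR that R0 al by (intro powr_mono2) auto
    have b1: "\<bar>u (x0 + \<eta> *\<^sub>R v) - a\<bar> \<le> L * (R+\<eta>) powr (2 * s - 1)"
      using bnd[OF out(1)[OF that]] nzp[OF e0] by simp
    have b2: "\<bar>u (x0 - \<eta> *\<^sub>R v) - a\<bar> \<le> L * \<bar>R-\<eta>\<bar> powr (2 * s - 1)"
      using bnd[OF out(2)[OF that]] nzm by simp
    have m1L: "L * (R+\<eta>) powr (2 * s - 1) \<le> L * (2 * \<eta>) powr (2 * s - 1)"
      using m1 L by (intro mult_left_mono) auto
    have m2L: "L * \<bar>R-\<eta>\<bar> powr (2 * s - 1) \<le> L * (2 * \<eta>) powr (2 * s - 1)"
      using m2 L by (intro mult_left_mono) auto
    have l1: "- (2 * (L * (2 * \<eta>) powr (2 * s - 1))) \<le> u (x0 + \<eta> *\<^sub>R v) - a - L * (R+\<eta>) powr (2 * s - 1)"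
      using abs_le_D2[OF b1] m1L by linarith
    have l2: "- (2 * (L * (2 * \<eta>) powr (2 * s - 1))) \<le> u (x0 - \<eta> *\<^sub>R v) - a - L * \<bar>R-\<eta>\<bar> powr (2 * s - 1)"
      using abs_le_D2[OF b2] m2L by linarith
    have u1: "u (x0 + \<eta> *\<^sub>R v) - a - L * (R+\<eta>) powr (2 * s - 1) \<le> 0"
      using abs_le_D1[OF b1] by linarith
    have u2: "u (x0 - \<eta> *\<^sub>R v) - a - L * \<bar>R-\<eta>\<bar> powr (2 * s - 1) \<le> 0"
      using abs_le_D1[OF b2] by linarith
    define N where "N = (u (x0 + \<eta> *\<^sub>R v) - a - L * (R+\<eta>) powr (2 * s - 1)) + (u (x0 - \<eta> *\<^sub>R v) - a - L * \<bar>R-\<eta>\<bar> powr (2 * s - 1)) - 2 * c"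
    have "\<bar>N\<bar> \<le> 4 * (L * (2 * \<eta>) powr (2 * s - 1)) + 2 * c"
      unfolding N_def using l1 l2 u1 u2 c0 by (intro abs_leI) linarith+
    then have "\<bar>D \<eta>\<bar> \<le> (4 * (L * (2 * \<eta>) powr (2 * s - 1)) + 2 * c) / \<eta> powr (1 + 2 * s)"
      unfolding Dhigh[OF that] N_def[symmetric] abs_divide abs_of_nonneg[OF powr_ge_zero] using e0 by (intro divide_right_mono) auto
    also have "\<dots> = Bd \<eta>"
    proof -
      have q1: "\<eta> powr (2 * s - 1) / \<eta> powr (1 + 2 * s) = \<eta> powr ((2 * s - 1) - (1 + 2 * s))"
        by (rule powr_diff[symmetric])
      have q2: "\<eta> powr ((2 * s - 1) - (1 + 2 * s)) = \<eta> powr (- 2)"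
        by (rule arg_cong[where f="\<lambda>t. \<eta> powr t"]) simp
      have "(2 * \<eta>) powr (2 * s - 1) / \<eta> powr (1 + 2 * s) = 2 powr (2 * s - 1) * (\<eta> powr (2 * s - 1) / \<eta> powr (1 + 2 * s))"
        using e0 by (simp add: powr_mult)
      also have "\<dots> = 2 powr (2 * s - 1) * \<eta> powr (- 2)" unfolding q1 q2 ..
      finally have fx: "(2 * \<eta>) powr (2 * s - 1) / \<eta> powr (1 + 2 * s) = 2 powr (2 * s - 1) * \<eta> powr (- 2)" .
      have f1: "(4 * (L * (2 * \<eta>) powr (2 * s - 1)) + 2 * c) / \<eta> powr (1 + 2 * s)
         = 4 * L * ((2 * \<eta>) powr (2 * s - 1) / \<eta> powr (1 + 2 * s)) + 2 * c * (1 / \<eta> powr (1 + 2 * s))"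
        by (simp add: add_divide_distrib)
      show ?thesis unfolding f1 fx Bd_def powr_minus_divide by simp
    qed
    finally show ?thesis .
  qed
  have al2: "1 - 2 * s > -1" using s by simp
  have q1: "1 < 1 + 2 * s" using s by simp
  have q2: "(1::real) < 2" by simp
  note P0 = int_pow_0r[OF al2 r0]
  note P1 = int_pow_rinf[OF q1 r0]
  note P2 = int_pow_rinf[OF q2 r0]
  have iD1: "set_integrable lborel {0<..<r} D"
  proof -
    have "set_integrable lborel {0<..<r} (\<lambda>x. 2 * eps * x powr (1 - 2 * s))"
      using P0(1) by (intro set_integrable_mult_right)
    then show ?thesis using set_integrable_cong[of lborel lborel "{0<..<r}" "{0<..<r}" D "\<lambda>x. 2 * eps * x powr (1 - 2 * s)"] Dlow
      by auto
  qed
  have LD1: "(LINT x:{0<..<r}|lborel. D x) = 2 * eps * K1"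
  proof -
    have "(LINT x:{0<..<r}|lborel. D x) = (LINT x:{0<..<r}|lborel. 2 * eps * x powr (1 - 2 * s))"
      using Dlow by (intro set_lebesgue_integral_cong) auto
    also have "\<dots> = 2 * eps * K1" using P0(2) unfolding K1_def by simp
    finally show ?thesis .
  qed
  have iBd: "set_integrable lborel {r<..} Bd"
    unfolding Bd_def using P1(1) P2(1) by (intro set_integral_add set_integrable_mult_right) auto
  have contD: "continuous_on {r<..} D"
  proof -
    have cu1: "continuous_on {r<..} (\<lambda>\<eta>. u (x0 + \<eta> *\<^sub>R v))"
      by (rule continuous_on_compose2[OF cont]) (auto intro!: continuous_intros)
    have cu2: "continuous_on {r<..} (\<lambda>\<eta>. u (x0 - \<eta> *\<^sub>R v))"
      by (rule continuous_on_compose2[OF cont]) (auto intro!: continuous_intros)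
    have pos: "\<forall>\<eta>\<in>{r<..}. 0 < R + \<eta> \<and> 0 < \<bar>R - \<eta>\<bar> \<and> 0 < \<eta>" using rR r0 R0 by auto
    have "continuous_on {r<..} (\<lambda>\<eta>. ((u (x0 + \<eta> *\<^sub>R v) - a - L * (R+\<eta>) powr (2 * s - 1)) + (u (x0 - \<eta> *\<^sub>R v) - a - L * \<bar>R-\<eta>\<bar> powr (2 * s - 1)) - 2 * c) / \<eta> powr (1 + 2 * s))" (is "continuous_on _ ?D'")
      using rR r0 R0 by (intro continuous_intros cu1 cu2) auto
    moreover have "continuous_on {r<..} D = continuous_on {r<..} ?D'"
      by (rule continuous_on_cong) (auto simp: Dhigh)
    ultimately show ?thesis by simp
  qed
  have iD2: "set_integrable lborel {r<..} D"
    by (rule set_integrable_cont_bound[OF _ contD iBd Dabs]) auto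
  note SP = split_Ioi[OF r0 iD1 iD2]
  have iM: "set_integrable lborel {r<..} (\<lambda>x. -2 * c * x powr (- (1 + 2 * s)))"
    using P1(1) by (intro set_integrable_mult_right)
  have LD2: "(LINT x:{r<..}|lborel. D x) \<le> -2 * c * K2"
  proof -
    have "(LINT x:{r<..}|lborel. D x) \<le> (LINT x:{r<..}|lborel. -2 * c * x powr (- (1 + 2 * s)))"
      using iD2 iM Dup by (intro set_integral_mono) auto
    also have "\<dots> = -2 * c * (LINT x:{r<..}|lborel. x powr (- (1 + 2 * s)))" by (rule set_integral_mult_right)
    also have "\<dots> = -2 * c * K2" unfolding P1(2) K2_def ..
    finally show ?thesis .
  qed
  have LD: "(LINT x:{0<..}|lborel. D x) < 0"
  proof -
    have "2 * eps * K1 = c * K2" unfolding eps_def using K1p by simp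
    then show ?thesis using SP(2) LD1 LD2 mult_pos_pos[OF c0 K2p] by linarith
  qed
  have Heq: "\<And>x. H x = L * kf x + D x" unfolding D_def by simp
  have "(LINT x:{0<..}|lborel. H x) = (LINT x:{0<..}|lborel. L * kf x + D x)" unfolding Heq ..
  also have "\<dots> = L * (LINT x:{0<..}|lborel. kf x) + (LINT x:{0<..}|lborel. D x)"
    using CI(1) SP(1) by (simp add: set_integral_add set_integrable_mult_right)
  also have "\<dots> < 0" using CI(2) LD by simp
  finally show False using lap lapH by simp
qed

lemma cone_both:
  fixes u :: "'a::euclidean_space \<Rightarrow> real" and \<Omega> :: "'a set" and y :: 'a
  assumes s: "1/2 < s" "s < 1" and bdd: "bounded \<Omega>" and cont: "continuous_on UNIV u"
    and L: "L > 0" and vs: "viscosity_solution s u \<Omega>"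
    and bnd: "\<And>w. w \<notin> \<Omega> \<Longrightarrow> \<bar>u w - a\<bar> \<le> L * norm (w - y) powr (2 * s - 1)"
    and yin: "y \<in> \<Omega> \<Longrightarrow> u y = a"
  shows "\<bar>u x - a\<bar> \<le> L * norm (x - y) powr (2 * s - 1)"
proof -
  have up: "u x \<le> a + L * norm (x - y) powr (2 * s - 1)"
  proof (rule cone_comparison[OF s bdd cont L bnd yin])
    fix x0 r \<phi> p
    assume x0: "x0 \<in> \<Omega>" and r: "r > 0" and c11: "c11_grad \<phi> x0 p"
      and cc: "continuous_on (cball x0 r) \<phi>" and e: "\<phi> x0 = u x0" and gt: "\<forall>x\<in>ball x0 r - {x0}. \<phi> x > u x"
    have "viscosity_subsolution_at s u x0" using vs x0 unfolding viscosity_solution_def by blast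
    moreover have "C11_at \<phi> x0" using c11 unfolding C11_at_def by blast
    ultimately show "inf_frac_lap s (\<lambda>x. if x \<in> ball x0 r then \<phi> x else u x) x0 \<ge> 0"
      using r cc e gt unfolding viscosity_subsolution_at_def by blast
  qed (auto simp: yin)
  have cont': "continuous_on UNIV (\<lambda>x. - u x)" using cont by (intro continuous_intros)
  have lo: "- u x \<le> - a + L * norm (x - y) powr (2 * s - 1)"
  proof (rule cone_comparison[OF s bdd cont' L, where a="- a" and y=y])
    show "\<And>w. w \<notin> \<Omega> \<Longrightarrow> \<bar>- u w - - a\<bar> \<le> L * norm (w - y) powr (2 * s - 1)"
      using bnd by (simp add: abs_minus_commute)
    show "y \<in> \<Omega> \<Longrightarrow> - u y = - a" using yin by simp
    fix x0 r \<phi> p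
    assume x0: "x0 \<in> \<Omega>" and r: "r > 0" and c11: "c11_grad \<phi> x0 p" and p0: "p \<noteq> 0"
      and cc: "continuous_on (cball x0 r) \<phi>" and e: "\<phi> x0 = - u x0" and gt: "\<forall>x\<in>ball x0 r - {x0}. \<phi> x > - u x"
    have "viscosity_supersolution_at s u x0" using vs x0 unfolding viscosity_solution_def by blast
    moreover have "C11_at (\<lambda>z. - \<phi> z) x0" using c11_neg[OF c11] unfolding C11_at_def by blast
    moreover have "continuous_on (cball x0 r) (\<lambda>z. - \<phi> z)" using cc by (intro continuous_intros)
    moreover have "(\<lambda>z. - \<phi> z) x0 = u x0" using e by simp
    moreover have "\<forall>x\<in>ball x0 r - {x0}. (\<lambda>z. - \<phi> z) x < u x" using gt by force
    ultimately have le: "inf_frac_lap s (\<lambda>x. if x \<in> ball x0 r then - \<phi> x else u x) x0 \<le> 0"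
      using r unfolding viscosity_supersolution_at_def by blast
    define G where "G = (\<lambda>x. if x \<in> ball x0 r then - \<phi> x else u x)"
    have cG: "c11_grad G x0 (- p)" unfolding G_def by (rule c11_glue[OF c11_neg[OF c11] r])
    have eq: "(\<lambda>x. if x \<in> ball x0 r then \<phi> x else - u x) = (\<lambda>x. - G x)"
      unfolding G_def by auto
    show "inf_frac_lap s (\<lambda>x. if x \<in> ball x0 r then \<phi> x else - u x) x0 \<ge> 0"
      using lap_neg[OF cG] p0 le unfolding eq G_def by simp
  qed
  show ?thesis using up lo by (simp add: abs_le_iff)
qed

lemma usc_lsc_cont:
  fixes u :: "'a::metric_space \<Rightarrow> real"
  assumes "usc u" "lsc u"
  shows "continuous_on UNIV u"
proof (rule continuous_at_imp_continuous_on, intro ballI)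
  fix x :: 'a
  show "isCont u x" unfolding isCont_def tendsto_iff
  proof (intro allI impI)
    fix e :: real assume e: "e > 0"
    have "\<forall>\<^sub>F y in at x. u y < u x + e" using assms(1) e unfolding usc_def by blast
    moreover have "\<forall>\<^sub>F y in at x. u y > u x - e" using assms(2) e unfolding lsc_def by blast
    ultimately show "\<forall>\<^sub>F y in at x. dist (u y) (u x) < e"
      by eventually_elim (simp add: dist_real_def abs_less_iff)
  qed
qed

lemma le_limit:
  fixes X L0 d :: real
  assumes "\<And>L. L > L0 \<Longrightarrow> X \<le> L * d" "d \<ge> 0"
  shows "X \<le> L0 * d"
proof (cases "d = 0")
  case True then show ?thesis using assms(1)[of "L0 + 1"] by simp
next
  case False
  then have d: "d > 0" using assms(2) by simp
  have "X / d \<le> L0"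
  proof (rule dense_ge)
    fix L assume "L0 < L"
    then show "X / d \<le> L" using assms(1)[of L] d by (simp add: divide_le_eq)
  qed
  then show ?thesis using d by (simp add: divide_le_eq)
qed

theorem corollary3p8:
  fixes s :: real and \<Omega> :: "'a::euclidean_space set" and u f :: "'a \<Rightarrow> real"
  assumes "1/2 < s" "s < 1"
    and "bounded \<Omega>" "open \<Omega>"
    and "viscosity_solution s u \<Omega>"
    and "\<forall>x. x \<notin> \<Omega> \<longrightarrow> u x = f x"
    and "holder f (- \<Omega>) (2 * s - 1)"
  shows "holder u UNIV (2 * s - 1) \<and>
         holder_seminorm u UNIV (2 * s - 1) \<le> holder_seminorm f (- \<Omega>) (2 * s - 1)"
proof (cases "\<Omega> = {}")
  case True
  then have "u = f" using assms(6) by auto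
  then show ?thesis using assms(7) True by simp
next
  case False
  note s = assms(1,2) and bdd = assms(3) and vs = assms(5) and uf = assms(6)
  have al: "0 < 2 * s - 1" using s by simp
  obtain x1 where x1: "x1 \<in> \<Omega>" using False by blast
  have "usc u" "lsc u" using vs x1
    unfolding viscosity_solution_def viscosity_subsolution_at_def viscosity_supersolution_at_def by blast+
  then have cont: "continuous_on UNIV u" by (rule usc_lsc_cont)
  define Sf where "Sf = holder_seminorm f (- \<Omega>) (2 * s - 1)"
  have Sfi: "Sf < \<infinity>" using assms(7) unfolding holder_def Sf_def .
  have term_le: "ereal (\<bar>f x - f y\<bar> / dist x y powr (2 * s - 1)) \<le> Sf" if "x \<notin> \<Omega>" "y \<notin> \<Omega>" "x \<noteq> y" for x y
    unfolding Sf_def holder_seminorm_def by (rule SUP_upper2[of "(x, y)"]) (use that in auto)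
  obtain B where B: "B > 0" "\<Omega> \<subseteq> ball 0 B" using bounded_subset_ballD[OF bdd] by blast
  obtain b :: 'a where b: "b \<in> Basis" using nonempty_Basis by blast
  define z1 where "z1 = (B + 1) *\<^sub>R b"
  define z2 where "z2 = (B + 2) *\<^sub>R b"
  have nb: "norm b = 1" using b by simp
  have z1: "z1 \<notin> \<Omega>" using B nb unfolding z1_def by (auto simp: subset_eq)
  have z2: "z2 \<notin> \<Omega>" using B nb unfolding z2_def by (auto simp: subset_eq)
  have z12: "z1 \<noteq> z2" using B nb unfolding z1_def z2_def by (auto simp: scaleR_cancel_right)
  have "0 \<le> Sf" using term_le[OF z1 z2 z12] by (rule order_trans[rotated]) simp
  then obtain L0 where L0: "Sf = ereal L0" "L0 \<ge> 0" using Sfi by (cases Sf) auto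
  have fH: "\<bar>f x - f y\<bar> \<le> L0 * norm (x - y) powr (2 * s - 1)" if "x \<notin> \<Omega>" "y \<notin> \<Omega>" for x y
  proof (cases "x = y")
    case True then show ?thesis by simp
  next
    case False
    have d: "norm (x - y) powr (2 * s - 1) > 0" using False by simp
    have "\<bar>f x - f y\<bar> / norm (x - y) powr (2 * s - 1) \<le> L0"
      using term_le[OF that False] L0(1) by (simp add: dist_norm)
    then show ?thesis using d by (simp add: divide_le_eq)
  qed
  have step1: "\<bar>u x - f y\<bar> \<le> L0 * norm (x - y) powr (2 * s - 1)" if y: "y \<notin> \<Omega>" for x y
  proof (rule le_limit)
    fix L assume L: "L > L0"
    show "\<bar>u x - f y\<bar> \<le> L * norm (x - y) powr (2 * s - 1)"
    proof (rule cone_both[OF s bdd cont _ vs])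
      show "L > 0" using L L0(2) by simp
      show "\<bar>u w - f y\<bar> \<le> L * norm (w - y) powr (2 * s - 1)" if "w \<notin> \<Omega>" for w
        using fH[OF that y] uf that mult_right_mono[OF less_imp_le[OF L], of "norm (w - y) powr (2 * s - 1)"]
        by simp
    qed (use y in auto)
  qed simp
  have step2: "\<bar>u x - u z\<bar> \<le> L0 * norm (x - z) powr (2 * s - 1)" if z: "z \<in> \<Omega>" for x z
  proof (rule le_limit)
    fix L assume L: "L > L0"
    show "\<bar>u x - u z\<bar> \<le> L * norm (x - z) powr (2 * s - 1)"
    proof (rule cone_both[OF s bdd cont _ vs])
      show "L > 0" using L L0(2) by simp
      show "\<bar>u w - u z\<bar> \<le> L * norm (w - z) powr (2 * s - 1)" if "w \<notin> \<Omega>" for w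
      proof -
        have "\<bar>u z - f w\<bar> \<le> L0 * norm (z - w) powr (2 * s - 1)" by (rule step1[OF that])
        then have "\<bar>u w - u z\<bar> \<le> L0 * norm (w - z) powr (2 * s - 1)"
          using uf that by (simp add: abs_minus_commute norm_minus_commute)
        then show ?thesis using mult_right_mono[OF less_imp_le[OF L], of "norm (w - z) powr (2 * s - 1)"] by simp
      qed
    qed simp
  qed simp
  have all: "\<bar>u x - u y\<bar> \<le> L0 * norm (x - y) powr (2 * s - 1)" for x y
  proof (cases "y \<in> \<Omega>")
    case True then show ?thesis by (rule step2)
  next
    case False then show ?thesis using step1[OF False, of x] uf by simp
  qed
  have semi: "holder_seminorm u UNIV (2 * s - 1) \<le> ereal L0"
    unfolding holder_seminorm_def
  proof (rule SUP_least)
    fix pq assume "pq \<in> {(x, y). x \<in> (UNIV::'a set) \<and> y \<in> UNIV \<and> x \<noteq> y}"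
    then obtain x y where pq: "pq = (x, y)" "x \<noteq> y" by auto
    have d: "dist x y powr (2 * s - 1) > 0" using pq by simp
    have "\<bar>u x - u y\<bar> / dist x y powr (2 * s - 1) \<le> L0"
      using all[of x y] d by (simp add: divide_le_eq dist_norm)
    then show "ereal (\<bar>u (fst pq) - u (snd pq)\<bar> / dist (fst pq) (snd pq) powr (2 * s - 1)) \<le> ereal L0"
      using pq by simp
  qed
  show ?thesis unfolding holder_def using semi L0(1) Sf_def
    by (auto intro: le_less_trans)
qed

end
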